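(* Let $x=(x_n)_{n\in\mathbb{Z}}$ be a real-valued sequence and let $i,j$ be two integers in the same connected component of the record graph of $x$. Then $i<j$ in $\mathbb{Z}$ if and only if $i\prec j$ in the RLS order of that component.
   Context: The record map is $R_x(i)=\inf\{n>i: \sum_{l=i}^{n-1}x_l\ge0\}$ if this set is nonempty, and $R_x(i)=i$ otherwise; the record graph has vertex set $\mathbb{Z}$ and directed edges $i\to R_x(i)$ for $R_x(i)\neq i$ (so $R_x(i)$ is the parent of $i$); components are in the undirected sense. Each component is an ordered Family Tree with the children of each vertex ordered by the order of $\mathbb{Z}$. Its RLS order $\prec$: for distinct vertices $u,v$, $u\prec v$ if $v=R_x^k(u)$ for some $k>0$, or if $w=R_x^m(u)=R_x^n(v)$ is their common ancestor with $m,n\ge1$ minimal and $R_x^{m-1}(u)<R_x^{n-1}(v)$ (comparison as children of $w$). *)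

theory Defs
  imports Complex_Main
begin

definition record_map :: "(int \<Rightarrow> real) \<Rightarrow> int \<Rightarrow> int" where
  "record_map x i =
     (if {n. n > i \<and> (\<Sum>l\<in>{i..<n}. x l) \<ge> 0} \<noteq> {}
      then Inf {n. n > i \<and> (\<Sum>l\<in>{i..<n}. x l) \<ge> 0}
      else i)"

definition record_edges :: "(int \<Rightarrow> real) \<Rightarrow> (int \<times> int) set" where
  "record_edges x = {(i, record_map x i) | i. record_map x i \<noteq> i}"

definition same_component :: "(int \<Rightarrow> real) \<Rightarrow> int \<Rightarrow> int \<Rightarrow> bool" where
  "same_component x i j \<longleftrightarrow> (i, j) \<in> (record_edges x \<union> (record_edges x)\<inverse>)\<^sup>*"

definition rls_less :: "(int \<Rightarrow> real) \<Rightarrow> int \<Rightarrow> int \<Rightarrow> bool" where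
  "rls_less x u v \<longleftrightarrow> u \<noteq> v \<and>
     ((\<exists>k>0. v = (record_map x ^^ k) u) \<or>
      (\<exists>m n. m \<ge> 1 \<and> n \<ge> 1 \<and> (record_map x ^^ m) u = (record_map x ^^ n) v \<and>
         (\<forall>m' n'. m' \<ge> 1 \<longrightarrow> n' \<ge> 1 \<longrightarrow>
             (record_map x ^^ m') u = (record_map x ^^ n') v \<longrightarrow> m \<le> m' \<and> n \<le> n') \<and>
         (record_map x ^^ (m - 1)) u < (record_map x ^^ (n - 1)) v))"

end

theory Submission
  imports Defs
begin

abbreviation S :: "(int \<Rightarrow> real) \<Rightarrow> int \<Rightarrow> int \<Rightarrow> real" where
  "S x a b \<equiv> (\<Sum>l\<in>{a..<b}. x l)"

lemma int_set_least:
  fixes X :: "int set"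
  assumes "X \<noteq> {}" "\<And>y. y \<in> X \<Longrightarrow> y > i"
  shows "\<exists>m\<in>X. \<forall>y\<in>X. m \<le> y"
proof -
  obtain y where y: "y \<in> X" using assms by auto
  let ?K = "{k::nat. i + 1 + int k \<in> X}"
  have "nat (y - i - 1) \<in> ?K" using y assms(2)[OF y] by auto
  then have ex: "\<exists>k. k \<in> ?K" by blast
  define k where "k = (LEAST k. k \<in> ?K)"
  have kK: "k \<in> ?K" unfolding k_def using ex by (rule LeastI_ex)
  have "\<forall>z\<in>X. i + 1 + int k \<le> z"
  proof
    fix z assume z: "z \<in> X"
    then have "nat (z - i - 1) \<in> ?K" using assms(2)[OF z] by auto
    then have "k \<le> nat (z - i - 1)" unfolding k_def by (rule Least_le)
    then show "i + 1 + int k \<le> z" using assms(2)[OF z] by auto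
  qed
  then show ?thesis using kK by auto
qed

lemma R_cases:
  fixes x i
  defines "R \<equiv> record_map x"
  shows "(R i = i \<and> (\<forall>n>i. S x i n < 0)) \<or>
         (R i > i \<and> S x i (R i) \<ge> 0 \<and> (\<forall>n. i < n \<and> n < R i \<longrightarrow> S x i n < 0))"
proof (cases "{n. n > i \<and> S x i n \<ge> 0} = {}")
  case True
  then have "R i = i" unfolding R_def record_map_def by auto
  then show ?thesis using True by auto
next
  case False
  let ?X = "{n. n > i \<and> S x i n \<ge> 0}"
  obtain m where m: "m \<in> ?X" "\<forall>y\<in>?X. m \<le> y"
    using int_set_least[OF False, of i] by auto
  have "Inf ?X = m" by (rule cInf_eq_minimum) (use m in auto)
  then have "R i = m" unfolding R_def record_map_def using False by auto
  then have "R i > i \<and> S x i (R i) \<ge> 0 \<and> (\<forall>n. i < n \<and> n < R i \<longrightarrow> S x i n < 0)"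
    using m by force
  then show ?thesis by blast
qed

lemma R_ge: "record_map x i \<ge> i"
  using R_cases[of x i] by auto

lemma R_le: "n > i \<Longrightarrow> S x i n \<ge> 0 \<Longrightarrow> record_map x i \<le> n"
proof -
  assume a: "n > i" "S x i n \<ge> 0"
  show ?thesis
  proof (rule ccontr)
    assume "\<not> record_map x i \<le> n"
    then have "n < record_map x i" by simp
    then show False using R_cases[of x i] a by force
  qed
qed

lemma sum_split: "a \<le> b \<Longrightarrow> b \<le> c \<Longrightarrow> S x a c = S x a b + S x b c"
proof -
  assume "a \<le> b" "b \<le> c"
  then have "{a..<c} = {a..<b} \<union> {b..<c}" by auto
  then show ?thesis by (simp add: sum.union_disjoint ivl_disj_int)
qed

lemma NC:
  assumes "c < a" "a < record_map x c"
  shows "record_map x a \<le> record_map x c"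
proof -
  let ?R = "record_map x"
  have h: "S x c (?R c) \<ge> 0" "S x c a < 0"
    using R_cases[of x c] assms by auto
  have "S x c (?R c) = S x c a + S x a (?R c)"
    using sum_split[of c a "?R c" x] assms by auto
  then have "S x a (?R c) \<ge> 0" using h by linarith
  then show ?thesis using R_le assms(2) by blast
qed

lemma orbit_mono: "k \<le> l \<Longrightarrow> (record_map x ^^ k) i \<le> (record_map x ^^ l) i"
proof (induction l)
  case 0 then show ?case by simp
next
  case (Suc l)
  show ?case
  proof (cases "k = Suc l")
    case True then show ?thesis by simp
  next
    case False
    then have "(record_map x ^^ k) i \<le> (record_map x ^^ l) i" using Suc by auto
    also have "\<dots> \<le> (record_map x ^^ Suc l) i" using R_ge by simp
    finally show ?thesis .
  qed
qed

lemma chain: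
  assumes "d \<le> a" "a < (record_map x ^^ k) d"
  shows "record_map x a \<le> (record_map x ^^ k) d"
  using assms
proof (induction k)
  case 0 then show ?case by simp
next
  case (Suc k)
  let ?R = "record_map x"
  let ?c = "(?R ^^ k) d"
  have step: "(?R ^^ Suc k) d = ?R ?c" by simp
  show ?case
  proof (cases "?c \<le> a")
    case True
    show ?thesis
    proof (cases "?c = a")
      case True then show ?thesis using step by simp
    next
      case False
      then have "?c < a" using True by auto
      then show ?thesis using NC[of ?c a x] Suc.prems step by auto
    qed
  next
    case False
    then have "?R a \<le> ?c" using Suc by auto
    also have "\<dots> \<le> ?R ?c" using R_ge by simp
    finally show ?thesis using step by simp
  qed
qed

lemma A:
  fixes x :: "int \<Rightarrow> real" and u v :: int and m n :: nat
  assumes mn: "m \<ge> 1" "n \<ge> 1" "(record_map x ^^ m) u = (record_map x ^^ n) v"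
    and minimal: "\<forall>m' n'. m' \<ge> 1 \<longrightarrow> n' \<ge> 1 \<longrightarrow>
             (record_map x ^^ m') u = (record_map x ^^ n') v \<longrightarrow> m \<le> m' \<and> n \<le> n'"
    and lt: "(record_map x ^^ (m - 1)) u < (record_map x ^^ (n - 1)) v"
  shows "u < v"
proof (rule ccontr)
  assume nuv: "\<not> u < v"
  define R where "R = record_map x"
  define a where "a = (R ^^ (m - 1)) u"
  define b where "b = (R ^^ (n - 1)) v"
  obtain m0 where m0: "m = Suc m0" using mn(1) by (cases m) auto
  obtain n0 where n0: "n = Suc n0" using mn(2) by (cases n) auto
  have ab: "a < b" using lt unfolding a_def b_def R_def .
  have ua: "u \<le> a" using orbit_mono[of 0 "m-1" x u] unfolding a_def R_def by simp
  have va: "v \<le> a" using nuv ua by auto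
  have "a < (record_map x ^^ n0) v" using ab unfolding b_def R_def n0 by simp
  then have c1: "R a \<le> b" using chain[OF va, of n0] unfolding b_def R_def n0 by simp
  have c2: "R a = (R ^^ m) u" unfolding a_def m0 by simp
  have c3: "R b = (R ^^ n) v" unfolding b_def n0 by simp
  have c4: "b \<le> R b" unfolding R_def by (rule R_ge)
  have eq: "(R ^^ n0) v = (R ^^ m) u" using c1 c2 c3 c4 mn(3) unfolding R_def b_def n0 by simp
  show False
  proof (cases "n0 = 0")
    case True
    then show ?thesis using va ab unfolding b_def n0 by simp
  next
    case False
    have "m \<le> m \<and> n \<le> n0"
      using minimal[rule_format, of m n0] mn(1) False eq unfolding R_def by simp
    then show ?thesis using n0 by simp
  qed
qed

lemma common_anc:
  assumes "same_component x i j"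
  shows "\<exists>a b. (record_map x ^^ a) i = (record_map x ^^ b) j"
proof -
  let ?R = "record_map x"
  have "(i, j) \<in> (record_edges x \<union> (record_edges x)\<inverse>)\<^sup>*"
    using assms unfolding same_component_def .
  then show ?thesis
  proof (induction rule: rtrancl_induct)
    case base
    show ?case by (rule exI[of _ 0], rule exI[of _ 0]) simp
  next
    case (step y z)
    then obtain a b where ab: "(?R ^^ a) i = (?R ^^ b) y" by blast
    from step(2) show ?case
    proof
      assume "(y, z) \<in> record_edges x"
      then have z: "z = ?R y" unfolding record_edges_def by auto
      show ?thesis
      proof (cases b)
        case 0
        then have "(?R ^^ Suc a) i = (?R ^^ 0) z" using ab z by simp
        then show ?thesis by blast
      next
        case (Suc b0)
        have "(?R ^^ b) y = (?R ^^ b0) (?R y)" unfolding Suc by (simp add: funpow_swap1)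
        then have "(?R ^^ a) i = (?R ^^ b0) z" using ab z by simp
        then show ?thesis by blast
      qed
    next
      assume "(y, z) \<in> (record_edges x)\<inverse>"
      then have y: "y = ?R z" unfolding record_edges_def by auto
      have "(?R ^^ a) i = (?R ^^ Suc b) z" using ab y by (simp add: funpow_swap1)
      then show ?thesis by blast
    qed
  qed
qed

theorem lemma2p22:
  fixes x :: "int \<Rightarrow> real" and i j :: int
  assumes "same_component x i j"
  shows "i < j \<longleftrightarrow> rls_less x i j"
proof
  let ?R = "record_map x"
  assume ij: "i < j"
  show "rls_less x i j"
  proof (cases "\<exists>k>0. j = (?R ^^ k) i")
    case True
    then show ?thesis unfolding rls_less_def using ij by blast
  next
    case notanc: False
    obtain a b where ab: "(?R ^^ a) i = (?R ^^ b) j" using common_anc[OF assms] by blast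
    define P where "P = (\<lambda>m' n'. m' \<ge> 1 \<and> n' \<ge> 1 \<and> (?R ^^ m') i = (?R ^^ n') j)"
    have Pab: "P (Suc a) (Suc b)" unfolding P_def using ab by (simp add: funpow_Suc_right)
    define m0 where "m0 = (LEAST m. \<exists>n. P m n)"
    define n0 where "n0 = (LEAST n. \<exists>m. P m n)"
    have "\<exists>n. P m0 n" unfolding m0_def using LeastI_ex[of "\<lambda>m. \<exists>n. P m n"] Pab by blast
    then obtain n1 where n1: "P m0 n1" by blast
    have "\<exists>m. P m n0" unfolding n0_def using LeastI_ex[of "\<lambda>n. \<exists>m. P m n"] Pab by blast
    then obtain m1 where m1: "P m1 n0" by blast
    have minm: "m0 \<le> m'" if "P m' n'" for m' n' unfolding m0_def using that Least_le[of "\<lambda>m. \<exists>n. P m n" m'] by blast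
    have minn: "n0 \<le> n'" if "P m' n'" for m' n' unfolding n0_def using that Least_le[of "\<lambda>n. \<exists>m. P m n" n'] by blast
    have "m0 \<le> m1" using minm[OF m1] .
    have "n0 \<le> n1" using minn[OF n1] .
    have "(?R ^^ n0) j \<le> (?R ^^ n1) j" using orbit_mono[OF \<open>n0 \<le> n1\<close>] .
    moreover have "(?R ^^ m0) i \<le> (?R ^^ m1) i" using orbit_mono[OF \<open>m0 \<le> m1\<close>] .
    ultimately have eq: "(?R ^^ m0) i = (?R ^^ n0) j" using n1 m1 unfolding P_def by simp
    have m0p: "m0 \<ge> 1" using n1 unfolding P_def by simp
    have n0p: "n0 \<ge> 1" using m1 unfolding P_def by simp
    have P0: "P m0 n0" unfolding P_def using eq m0p n0p by simp
    have minimal: "\<forall>m' n'. m' \<ge> 1 \<longrightarrow> n' \<ge> 1 \<longrightarrow>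
             (?R ^^ m') i = (?R ^^ n') j \<longrightarrow> m0 \<le> m' \<and> n0 \<le> n'"
    proof (intro allI impI)
      fix m' n' assume h: "m' \<ge> 1" "n' \<ge> 1" "(?R ^^ m') i = (?R ^^ n') j"
      then have "P m' n'" unfolding P_def by simp
      then show "m0 \<le> m' \<and> n0 \<le> n'" using minm minn by simp
    qed
    have minimal2: "\<forall>m' n'. m' \<ge> 1 \<longrightarrow> n' \<ge> 1 \<longrightarrow>
             (?R ^^ m') j = (?R ^^ n') i \<longrightarrow> n0 \<le> m' \<and> m0 \<le> n'"
    proof (intro allI impI)
      fix m' n' assume h: "m' \<ge> 1" "n' \<ge> 1" "(?R ^^ m') j = (?R ^^ n') i"
      then have "P n' m'" unfolding P_def by simp
      then show "n0 \<le> m' \<and> m0 \<le> n'" using minm minn by simp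
    qed
    have lt: "(?R ^^ (m0 - 1)) i < (?R ^^ (n0 - 1)) j"
    proof -
      consider "(?R ^^ (m0 - 1)) i = (?R ^^ (n0 - 1)) j"
        | "(?R ^^ (n0 - 1)) j < (?R ^^ (m0 - 1)) i"
        | "(?R ^^ (m0 - 1)) i < (?R ^^ (n0 - 1)) j" by linarith
      then show ?thesis
      proof cases
        case 1
        show ?thesis
        proof (cases "m0 = 1")
          case True
          then have "i = (?R ^^ (n0 - 1)) j" using 1 by simp
          moreover have "j \<le> (?R ^^ (n0 - 1)) j" using orbit_mono[of 0 "n0-1" x j] by simp
          ultimately show ?thesis using ij by simp
        next
          case m0ne: False
          show ?thesis
          proof (cases "n0 = 1")
            case True
            then have "j = (?R ^^ (m0 - 1)) i" using 1 by simp
            moreover have "m0 - 1 > 0" using m0ne m0p by simp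
            ultimately show ?thesis using notanc by blast
          next
            case False
            then have "P (m0 - 1) (n0 - 1)" unfolding P_def using 1 m0ne m0p n0p by auto
            then have "m0 \<le> m0 - 1" by (rule minm)
            then show ?thesis using m0p by simp
          qed
        qed
      next
        case 2
        have "j < i" by (rule A[OF n0p m0p eq[symmetric] minimal2 2])
        then show ?thesis using ij by simp
      next
        case 3 then show ?thesis .
      qed
    qed
    have ex: "\<exists>m n. m \<ge> 1 \<and> n \<ge> 1 \<and> (?R ^^ m) i = (?R ^^ n) j \<and>
         (\<forall>m' n'. m' \<ge> 1 \<longrightarrow> n' \<ge> 1 \<longrightarrow>
             (?R ^^ m') i = (?R ^^ n') j \<longrightarrow> m \<le> m' \<and> n \<le> n') \<and>
         (?R ^^ (m - 1)) i < (?R ^^ (n - 1)) j"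
      by (rule exI[of _ m0], rule exI[of _ n0]) (intro conjI m0p n0p eq minimal lt)
    show ?thesis unfolding rls_less_def
      using ij ex by simp
  qed
next
  let ?R = "record_map x"
  assume r: "rls_less x i j"
  then have ne: "i \<noteq> j" unfolding rls_less_def by simp
  from r have "(\<exists>k>0. j = (?R ^^ k) i) \<or>
      (\<exists>m n. m \<ge> 1 \<and> n \<ge> 1 \<and> (?R ^^ m) i = (?R ^^ n) j \<and>
         (\<forall>m' n'. m' \<ge> 1 \<longrightarrow> n' \<ge> 1 \<longrightarrow>
             (?R ^^ m') i = (?R ^^ n') j \<longrightarrow> m \<le> m' \<and> n \<le> n') \<and>
         (?R ^^ (m - 1)) i < (?R ^^ (n - 1)) j)" unfolding rls_less_def by (rule conjunct2)
  then show "i < j"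
  proof (elim disjE exE conjE)
    fix k assume "k > 0" "j = (?R ^^ k) i"
    then have "i \<le> j" using orbit_mono[of 0 k x i] by simp
    then show ?thesis using ne by simp
  next
    fix m n assume h: "m \<ge> 1" "n \<ge> 1" "(?R ^^ m) i = (?R ^^ n) j"
        "\<forall>m' n'. m' \<ge> 1 \<longrightarrow> n' \<ge> 1 \<longrightarrow>
             (?R ^^ m') i = (?R ^^ n') j \<longrightarrow> m \<le> m' \<and> n \<le> n'"
        "(?R ^^ (m - 1)) i < (?R ^^ (n - 1)) j"
    show ?thesis by (rule A[OF h])
  qed
qed

end
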